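(* Let $f:\mathbb{R}^d\to\mathbb{R}^m$ be a function such that (1) $f$ is continuous at every point of $\mathbb{R}^d$; (2) $f$ is piecewise Lipschitz with exceptional set $\Theta$; (3) for all $x,y\in\mathbb{R}^d$ and $\eta>0$ there exists a continuous curve $\gamma$ from $x$ to $y$ with $\ell(\gamma)<\|x-y\|+\eta$ that intersects $\Theta$ in only finitely many points. Then $f$ is Lipschitz on $\mathbb{R}^d$ with respect to the Euclidean metric, with the same Lipschitz constant as the intrinsic Lipschitz constant of $f|_{\mathbb{R}^d\setminus\Theta}$.
   Context: Length of a continuous curve $\gamma:[0,1]\to\mathbb{R}^d$: $\ell(\gamma)=\sup\sum_{k=1}^n\|\gamma(t_k)-\gamma(t_{k-1})\|$ over all partitions $0\le t_0<\dots<t_n\le1$. For $A\subseteq\mathbb{R}^d$, the intrinsic metric is $\rho(x,y)=\inf\{\ell(\gamma):\gamma:[0,1]\to A\text{ continuous},\gamma(0)=x,\gamma(1)=y\}$ ($\infty$ if no such curve). $g:A\to\mathbb{R}^m$ is intrinsic Lipschitz with constant $L$ if $\|g(x)-g(y)\|\le L\rho(x,y)$ for all $x,y\in A$. $f:\mathbb{R}^d\to\mathbb{R}^m$ is piecewise Lipschitz with exceptional set $\Theta$ if $\Theta$ is a hypersurface ($(d-1)$-dimensional submanifold of $\mathbb{R}^d$) with finitely many connected components and $f|_{\mathbb{R}^d\setminus\Theta}$ is intrinsic Lipschitz on $\mathbb{R}^d\setminus\Theta$. *)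

theory Defs
  imports "HOL-Analysis.Analysis"
begin

definition curve_length :: "(real \<Rightarrow> 'a::real_normed_vector) \<Rightarrow> ereal" where
  "curve_length \<gamma> =
     (SUP ts \<in> {ts. sorted_wrt (<) ts \<and> set ts \<subseteq> {0..1}}.
        ereal (\<Sum>k<length ts - 1. dist (\<gamma> (ts ! (Suc k))) (\<gamma> (ts ! k))))"

text \<open>Intrinsic metric of A (infinite if no curve in A joins x and y).\<close>
definition intrinsic_dist :: "'a::real_normed_vector set \<Rightarrow> 'a \<Rightarrow> 'a \<Rightarrow> ereal" where
  "intrinsic_dist A x y =
     (INF \<gamma> \<in> {\<gamma>. continuous_on {0..1} \<gamma> \<and> \<gamma> ` {0..1} \<subseteq> A \<and> \<gamma> 0 = x \<and> \<gamma> 1 = y}.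
        curve_length \<gamma>)"

definition intrinsic_lipschitz ::
    "'a::real_normed_vector set \<Rightarrow> ('a \<Rightarrow> 'b::real_normed_vector) \<Rightarrow> real \<Rightarrow> bool" where
  "intrinsic_lipschitz A g L \<longleftrightarrow>
     (\<forall>x\<in>A. \<forall>y\<in>A. intrinsic_dist A x y < \<infinity> \<longrightarrow>
        dist (g x) (g y) \<le> L * real_of_ereal (intrinsic_dist A x y))"

text \<open>Hypersurface: (d-1)-dimensional embedded C^1 submanifold of the euclidean space 'a,
  via local straightening charts onto a coordinate hyperplane.\<close>
definition hypersurface :: "'a::euclidean_space set \<Rightarrow> bool" where
  "hypersurface \<Theta> \<longleftrightarrow>
     (\<forall>p\<in>\<Theta>. \<exists>U V (\<psi>::'a\<Rightarrow>'a) (\<phi>::'a\<Rightarrow>'a) \<psi>' \<phi>' b.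
        open U \<and> open V \<and> p \<in> U \<and> b \<in> Basis \<and>
        homeomorphism U V \<psi> \<phi> \<and>
        (\<forall>x\<in>U. (\<psi> has_derivative blinfun_apply (\<psi>' x)) (at x)) \<and> continuous_on U \<psi>' \<and>
        (\<forall>y\<in>V. (\<phi> has_derivative blinfun_apply (\<phi>' y)) (at y)) \<and> continuous_on V \<phi>' \<and>
        \<psi> ` (\<Theta> \<inter> U) = {y \<in> V. y \<bullet> b = 0})"

definition piecewise_lipschitz ::
    "('a::euclidean_space \<Rightarrow> 'b::real_normed_vector) \<Rightarrow> 'a set \<Rightarrow> bool" where
  "piecewise_lipschitz f \<Theta> \<longleftrightarrow>
     hypersurface \<Theta> \<and> finite (components \<Theta>) \<and>
     (\<exists>L. intrinsic_lipschitz (UNIV - \<Theta>) f L)"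

end

theory Submission
  imports Defs
begin

fun psum :: "(real \<Rightarrow> 'a::real_normed_vector) \<Rightarrow> real list \<Rightarrow> real" where
  "psum \<gamma> (x#y#ys) = dist (\<gamma> y) (\<gamma> x) + psum \<gamma> (y#ys)"
| "psum \<gamma> _ = 0"

lemma psum_eq: "(\<Sum>k<length ts - 1. dist (\<gamma> (ts ! (Suc k))) (\<gamma> (ts ! k))) = psum \<gamma> ts"
proof (induction \<gamma> ts rule: psum.induct)
  case (1 \<gamma> x y ys)
  have "length (x#y#ys) - 1 = Suc (length (y#ys) - 1)" by simp
  then show ?case using 1 by (simp only: sum.lessThan_Suc_shift) simp
qed auto

lemma psum_nonneg: "0 \<le> psum \<gamma> ts"
  by (induction \<gamma> ts rule: psum.induct) auto

lemma psum_snoc_cons: "psum \<gamma> (xs @ [c]) + psum \<gamma> (c # ys) = psum \<gamma> (xs @ c # ys)"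
proof (induction xs)
  case (Cons x xs)
  then show ?case by (cases xs) auto
qed simp

lemma psum_cons_ge: "psum \<gamma> ys \<le> psum \<gamma> (x # ys)"
  by (cases ys) (auto)

lemma psum_append: "psum \<gamma> xs + psum \<gamma> ys \<le> psum \<gamma> (xs @ ys)"
proof (induction xs)
  case Nil then show ?case by simp
next
  case (Cons x xs)
  show ?case
  proof (cases xs)
    case Nil then show ?thesis using psum_cons_ge[of \<gamma> ys x] by simp
  next
    case (Cons y zs)
    then show ?thesis using Cons.IH \<open>xs = y # zs\<close> by simp
  qed
qed

definition len :: "(real \<Rightarrow> 'a::real_normed_vector) \<Rightarrow> real \<Rightarrow> real \<Rightarrow> ereal" where
  "len \<gamma> a b = (SUP ts \<in> {ts. sorted_wrt (<) ts \<and> set ts \<subseteq> {a..b}}. ereal (psum \<gamma> ts))"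

lemma curve_length_len: "curve_length \<gamma> = len \<gamma> 0 1"
  unfolding curve_length_def len_def psum_eq ..

lemma len_nonneg: "0 \<le> len \<gamma> a b"
  unfolding len_def by (rule SUP_upper2[where i="[]"]) auto

lemma len_mono: "a \<le> c \<Longrightarrow> d \<le> b \<Longrightarrow> len \<gamma> c d \<le> len \<gamma> a b"
  unfolding len_def by (rule SUP_subset_mono) auto

lemma len_ge: "sorted_wrt (<) ts \<Longrightarrow> set ts \<subseteq> {a..b} \<Longrightarrow> ereal (psum \<gamma> ts) \<le> len \<gamma> a b"
  unfolding len_def by (rule SUP_upper) auto

lemma len_add_aux:
  assumes s1: "sorted_wrt (<) ts1" "set ts1 \<subseteq> {a..c}"
    and s2: "sorted_wrt (<) ts2" "set ts2 \<subseteq> {c..b}" and ac: "a \<le> c" "c \<le> b"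
  shows "\<exists>ts. sorted_wrt (<) ts \<and> set ts \<subseteq> {a..b} \<and> psum \<gamma> ts1 + psum \<gamma> ts2 \<le> psum \<gamma> ts"
proof (cases "c \<in> set ts1 \<and> c \<in> set ts2")
  case True
  then obtain xs zs where t1: "ts1 = xs @ c # zs" by (meson split_list)
  from True obtain us vs where t2: "ts2 = us @ c # vs" by (meson split_list)
  have "zs = []"
  proof (rule ccontr)
    assume "zs \<noteq> []" then obtain z where "z \<in> set zs" by (cases zs) auto
    then have "c < z" "z \<le> c" using s1 t1 by (auto simp: sorted_wrt_append)
    then show False by simp
  qed
  have "us = []"
  proof (rule ccontr)
    assume "us \<noteq> []" then obtain z where "z \<in> set us" by (cases us) auto
    then have "z < c" "c \<le> z" using s2 t2 by (auto simp: sorted_wrt_append)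
    then show False by simp
  qed
  have "psum \<gamma> ts1 + psum \<gamma> ts2 = psum \<gamma> (xs @ c # vs)"
    using t1 t2 \<open>zs = []\<close> \<open>us = []\<close> psum_snoc_cons by simp
  moreover have "sorted_wrt (<) (xs @ c # vs)"
    using s1 s2 t1 t2 \<open>zs = []\<close> \<open>us = []\<close> by (auto simp: sorted_wrt_append intro: less_trans)
  moreover have "set (xs @ c # vs) \<subseteq> {a..b}"
    using s1 s2 t1 t2 \<open>zs = []\<close> \<open>us = []\<close> by auto
  ultimately show ?thesis by (metis order_refl)
next
  case False
  have "\<forall>x\<in>set ts1. \<forall>y\<in>set ts2. x < y"
  proof (intro ballI)
    fix x y assume "x \<in> set ts1" "y \<in> set ts2"
    then have "x \<le> c" "c \<le> y" "\<not> (x = c \<and> y = c)" using s1 s2 False by auto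
    then show "x < y" by linarith
  qed
  then have "sorted_wrt (<) (ts1 @ ts2)"
    using s1 s2 by (simp add: sorted_wrt_append)
  moreover have "set (ts1 @ ts2) \<subseteq> {a..b}" using s1 s2 ac by fastforce
  ultimately show ?thesis using psum_append by blast
qed

lemma len_add:
  assumes "a \<le> c" "c \<le> b"
  shows "len \<gamma> a c + len \<gamma> c b \<le> len \<gamma> a b"
proof -
  have "len \<gamma> a c + len \<gamma> c b = (SUP ts1 \<in> {ts. sorted_wrt (<) ts \<and> set ts \<subseteq> {a..c}}. ereal (psum \<gamma> ts1) + len \<gamma> c b)"
    unfolding len_def[of \<gamma> a c]
    by (rule SUP_ereal_add_left[symmetric]) (auto intro!: exI[of _ "[]"] simp: len_nonneg[THEN order_trans[rotated]] )
  also have "\<dots> \<le> len \<gamma> a b"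
  proof (rule SUP_least)
    fix ts1 assume t1: "ts1 \<in> {ts. sorted_wrt (<) ts \<and> set ts \<subseteq> {a..c}}"
    have "len \<gamma> c b + ereal (psum \<gamma> ts1) = (SUP ts2 \<in> {ts. sorted_wrt (<) ts \<and> set ts \<subseteq> {c..b}}. ereal (psum \<gamma> ts2) + ereal (psum \<gamma> ts1))"
      unfolding len_def[of \<gamma> c b]
      by (rule SUP_ereal_add_left[symmetric]) (auto intro!: exI[of _ "[]"])
    also have "\<dots> \<le> len \<gamma> a b"
    proof (rule SUP_least)
      fix ts2 assume t2: "ts2 \<in> {ts. sorted_wrt (<) ts \<and> set ts \<subseteq> {c..b}}"
      obtain ts where ts: "sorted_wrt (<) ts" "set ts \<subseteq> {a..b}" "psum \<gamma> ts1 + psum \<gamma> ts2 \<le> psum \<gamma> ts"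
        using len_add_aux[of ts1 a c ts2 b \<gamma>] t1 t2 assms by auto
      have "ereal (psum \<gamma> ts2) + ereal (psum \<gamma> ts1) \<le> ereal (psum \<gamma> ts)" using ts(3) by simp
      also have "\<dots> \<le> len \<gamma> a b" using len_ge ts by blast
      finally show "ereal (psum \<gamma> ts2) + ereal (psum \<gamma> ts1) \<le> len \<gamma> a b" .
    qed
    finally show "ereal (psum \<gamma> ts1) + len \<gamma> c b \<le> len \<gamma> a b" by (simp add: add.commute)
  qed
  finally show ?thesis .
qed

lemma psum_map: "psum (\<lambda>t. \<gamma> (\<phi> t)) ts = psum \<gamma> (map \<phi> ts)"
  by (induction "\<lambda>t. \<gamma> (\<phi> t)" ts rule: psum.induct) auto

lemma len_reparam:
  assumes "a < b"
  shows "curve_length (\<lambda>t. \<gamma> (a + (b - a) * t)) \<le> len \<gamma> a b"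
  unfolding curve_length_len len_def[of "\<lambda>t. \<gamma> (a + (b - a) * t)"]
proof (rule SUP_least)
  fix ts :: "real list" assume ts: "ts \<in> {ts. sorted_wrt (<) ts \<and> set ts \<subseteq> {0..1}}"
  let ?\<phi> = "\<lambda>t. a + (b - a) * t"
  have "sorted_wrt (<) (map ?\<phi> ts)"
    using ts assms by (auto simp: sorted_wrt_map elim!: sorted_wrt_mono_rel[rotated])
  moreover have "set (map ?\<phi> ts) \<subseteq> {a..b}"
  proof
    fix x assume "x \<in> set (map ?\<phi> ts)"
    then obtain t where "t \<in> {0..1}" "x = ?\<phi> t" using ts by auto
    have "(b - a) * t \<le> (b - a)" using \<open>t \<in> {0..1}\<close> assms mult_left_mono[of t 1 "b-a"]
      by auto
    moreover have "0 \<le> (b - a) * t" using \<open>t \<in> {0..1}\<close> assms by simp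
    ultimately have "a \<le> x" "x \<le> b" using assms \<open>x = ?\<phi> t\<close> by linarith+
    then show "x \<in> {a..b}" by simp
  qed
  ultimately show "ereal (psum (\<lambda>t. \<gamma> (?\<phi> t)) ts) \<le> len \<gamma> a b"
    by (subst psum_map[of \<gamma> ?\<phi> ts]) (rule len_ge)
qed

lemma curve_length_ge: "dist (\<gamma> 0) (\<gamma> 1) \<le> curve_length \<gamma>"
  unfolding curve_length_len using len_ge[of "[0,1]" 0 1 \<gamma>] by (simp add: dist_commute)


lemma ext_closure:
  fixes g :: "real \<Rightarrow> real"
  assumes "continuous_on {a..b} g" "a < b" "\<And>t. t \<in> {a<..<b} \<Longrightarrow> g t \<le> C" "t \<in> {a..b}"
  shows "g t \<le> C"
  using continuous_le_on_closure[of "{a<..<b}" g t C] assms by simp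

lemma key:
  fixes \<gamma> :: "real \<Rightarrow> 'a::real_normed_vector" and h :: "real \<Rightarrow> 'b::real_normed_vector"
  assumes \<gamma>c: "continuous_on {0..1} \<gamma>" and hc: "continuous_on {0..1} h"
    and h\<gamma>: "\<forall>s\<in>{0..1}. \<forall>t\<in>{0..1}. \<gamma> s = \<gamma> t \<longrightarrow> h s = h t"
    and fin: "finite (\<gamma> ` {0..1} \<inter> S)"
    and wnn: "\<forall>a b. 0 \<le> a \<longrightarrow> a \<le> b \<longrightarrow> b \<le> 1 \<longrightarrow> 0 \<le> w a b"
    and wmono: "\<forall>a b c d. 0 \<le> a \<longrightarrow> a \<le> c \<longrightarrow> c \<le> d \<longrightarrow> d \<le> b \<longrightarrow> b \<le> 1 \<longrightarrow> w c d \<le> w a b"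
    and wadd: "\<forall>a b c d. 0 \<le> a \<longrightarrow> a \<le> c \<longrightarrow> c \<le> d \<longrightarrow> d \<le> b \<longrightarrow> b \<le> 1 \<longrightarrow> w a c + w d b \<le> w a b"
    and base: "\<forall>a b. 0 \<le> a \<longrightarrow> a < b \<longrightarrow> b \<le> 1 \<longrightarrow> \<gamma> ` {a..b} \<inter> S = {} \<longrightarrow> dist (h a) (h b) \<le> w a b"
  shows "dist (h 0) (h 1) \<le> w 0 1"
proof -
  have main: "\<forall>a b. 0 \<le> a \<longrightarrow> a \<le> b \<longrightarrow> b \<le> 1 \<longrightarrow> \<gamma> ` {a<..<b} \<inter> S \<subseteq> P \<longrightarrow> dist (h a) (h b) \<le> w a b"
    if "finite P" for P
    using that
  proof (induction P rule: finite_induct)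
    case empty
    show ?case
    proof (intro allI impI)
      fix a b :: real assume ab: "0 \<le> a" "a \<le> b" "b \<le> 1" and emp: "\<gamma> ` {a<..<b} \<inter> S \<subseteq> {}"
      show "dist (h a) (h b) \<le> w a b"
      proof (cases "a = b")
        case True then show ?thesis using wnn ab by simp
      next
        case False
        then have ab': "a < b" using ab by simp
        have hc': "continuous_on {a..b} h" by (rule continuous_on_subset[OF hc]) (use ab in auto)
        have inner: "dist (h s) (h t) \<le> w a b" if "a < s" "s < t" "t < b" for s t
        proof -
          have "\<gamma> ` {s..t} \<inter> S = {}" using emp that by fastforce
          then have "dist (h s) (h t) \<le> w s t" using base that ab by auto
          also have "\<dots> \<le> w a b" using wmono that ab by auto
          finally show ?thesis .
        qed
        have step1: "dist (h s) (h b) \<le> w a b" if "a < s" "s < b" for s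
        proof -
          have "continuous_on {s..b} (\<lambda>t. dist (h s) (h t))"
            by (intro continuous_intros continuous_on_subset[OF hc']) (use that in auto)
          from ext_closure[OF this \<open>s < b\<close>, of "w a b" b] show ?thesis
            using inner that by auto
        qed
        have "continuous_on {a..b} (\<lambda>s. dist (h s) (h b))"
          by (intro continuous_intros hc')
        from ext_closure[OF this ab', of "w a b" a] show ?thesis
          using step1 ab' by auto
      qed
    qed
  next
    case (insert q P)
    show ?case
    proof (intro allI impI)
      fix a b :: real assume ab: "0 \<le> a" "a \<le> b" "b \<le> 1" and sub: "\<gamma> ` {a<..<b} \<inter> S \<subseteq> insert q P"
      show "dist (h a) (h b) \<le> w a b"
      proof (cases "q \<in> \<gamma> ` {a<..<b}")
        case False
        then have "\<gamma> ` {a<..<b} \<inter> S \<subseteq> P" using sub by auto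
        then show ?thesis using insert.IH ab by auto
      next
        case True
        define K where "K = {t \<in> {a..b}. \<gamma> t = q}"
        have \<gamma>c': "continuous_on {a..b} \<gamma>" by (rule continuous_on_subset[OF \<gamma>c]) (use ab in auto)
        have clK: "closed K" unfolding K_def
          by (rule continuous_closed_preimage_constant[OF \<gamma>c']) simp
        have neK: "K \<noteq> {}"
        proof -
          obtain t where "t \<in> {a<..<b}" "q = \<gamma> t" using True by auto
          then have "t \<in> K" unfolding K_def by auto
          then show ?thesis by auto
        qed
        have bdK: "bdd_below K" "bdd_above K" unfolding K_def by (auto intro: bdd_belowI bdd_aboveI)
        define a' where "a' = Inf K"
        define b' where "b' = Sup K"
        have a'K: "a' \<in> K" unfolding a'_def using closed_contains_Inf neK bdK clK by blast
        have b'K: "b' \<in> K" unfolding b'_def using closed_contains_Sup neK bdK clK by blast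
        have a'b': "a' \<le> b'" unfolding a'_def b'_def using neK bdK by (meson cInf_le_cSup)
        have lo: "a \<le> a'" "b' \<le> b" using a'K b'K unfolding K_def by auto
        have q: "\<gamma> a' = q" "\<gamma> b' = q" using a'K b'K unfolding K_def by auto
        have s1: "\<gamma> ` {a<..<a'} \<inter> S \<subseteq> P"
        proof
          fix z assume z: "z \<in> \<gamma> ` {a<..<a'} \<inter> S"
          then obtain t where t: "t \<in> {a<..<a'}" "z = \<gamma> t" by auto
          have "t \<notin> K" using t cInf_lower[OF _ bdK(1), of t] unfolding a'_def by force
          then have "z \<noteq> q" using t lo a'b' unfolding K_def by auto
          moreover have "z \<in> \<gamma> ` {a<..<b} \<inter> S" using z t lo a'b' by auto
          ultimately show "z \<in> P" using sub by auto
        qed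
        have s2: "\<gamma> ` {b'<..<b} \<inter> S \<subseteq> P"
        proof
          fix z assume z: "z \<in> \<gamma> ` {b'<..<b} \<inter> S"
          then obtain t where t: "t \<in> {b'<..<b}" "z = \<gamma> t" by auto
          have "t \<notin> K" using t cSup_upper[OF _ bdK(2), of t] unfolding b'_def by force
          then have "z \<noteq> q" using t lo a'b' unfolding K_def by auto
          moreover have "z \<in> \<gamma> ` {a<..<b} \<inter> S" using z t lo a'b' by auto
          ultimately show "z \<in> P" using sub by auto
        qed
        have d1: "dist (h a) (h a') \<le> w a a'" using insert.IH s1 ab lo a'b' by auto
        have d2: "dist (h b') (h b) \<le> w b' b" using insert.IH s2 ab lo a'b' by auto
        have "h a' = h b'" using h\<gamma> q ab lo a'b' by auto
        then have "dist (h a) (h b) \<le> dist (h a) (h a') + dist (h b') (h b)"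
          using dist_triangle[of "h a" "h b" "h a'"] by (simp add: dist_commute)
        also have "\<dots> \<le> w a a' + w b' b" using d1 d2 by simp
        also have "\<dots> \<le> w a b" using wadd ab lo a'b' by auto
        finally show ?thesis .
      qed
    qed
  qed
  have "\<gamma> ` {0<..<1} \<inter> S \<subseteq> \<gamma> ` {0..1} \<inter> S" by auto
  then show ?thesis using main[OF fin] by auto
qed


lemma affine_in:
  fixes a b t :: real
  assumes "a < b" "0 \<le> t" "t \<le> 1"
  shows "a \<le> a + (b - a) * t" "a + (b - a) * t \<le> b"
proof -
  have "(b - a) * t \<le> (b - a)" using assms mult_left_mono[of t 1 "b-a"] by auto
  moreover have "0 \<le> (b - a) * t" using assms by simp
  ultimately show "a \<le> a + (b - a) * t" "a + (b - a) * t \<le> b" by linarith+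
qed

lemma intrinsic_ge: "ereal (dist x y) \<le> intrinsic_dist A x y"
  unfolding intrinsic_dist_def
proof (rule INF_greatest)
  fix \<delta> :: "real \<Rightarrow> 'a" assume "\<delta> \<in> {\<gamma>. continuous_on {0..1} \<gamma> \<and> \<gamma> ` {0..1} \<subseteq> A \<and> \<gamma> 0 = x \<and> \<gamma> 1 = y}"
  then show "ereal (dist x y) \<le> curve_length \<delta>" using curve_length_ge[of \<delta>] by auto
qed

lemma seg:
  fixes \<gamma> :: "real \<Rightarrow> 'a::real_normed_vector"
  assumes \<gamma>c: "continuous_on {0..1} \<gamma>" and ab: "0 \<le> a" "a < b" "b \<le> 1" and sub: "\<gamma> ` {a..b} \<subseteq> A"
  shows "intrinsic_dist A (\<gamma> a) (\<gamma> b) \<le> len \<gamma> a b"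
proof -
  let ?\<delta> = "\<lambda>t. \<gamma> (a + (b - a) * t)"
  have img: "(\<lambda>t. a + (b - a) * t) ` {0..1} \<subseteq> {a..b}"
    using affine_in[OF ab(2)] by auto
  have "continuous_on {0..1} ?\<delta>"
    by (rule continuous_on_compose2[OF \<gamma>c]) (use img ab in \<open>auto intro!: continuous_intros\<close>)
  moreover have "?\<delta> ` {0..1} \<subseteq> A" using img sub by auto
  ultimately have "intrinsic_dist A (\<gamma> a) (\<gamma> b) \<le> curve_length ?\<delta>"
    unfolding intrinsic_dist_def by (intro INF_lower) auto
  also have "\<dots> \<le> len \<gamma> a b" by (rule len_reparam[OF ab(2)])
  finally show ?thesis .
qed

lemma fin_len:
  assumes "curve_length \<gamma> < \<infinity>" "0 \<le> a" "a \<le> b" "b \<le> 1"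
  shows "len \<gamma> a b = ereal (real_of_ereal (len \<gamma> a b))"
proof -
  have "len \<gamma> a b \<le> len \<gamma> 0 1" using assms by (intro len_mono) auto
  then have "len \<gamma> a b < \<infinity>" using assms(1) curve_length_len[of \<gamma>]
    order.strict_trans1[of "len \<gamma> a b" "len \<gamma> 0 1" \<infinity>] by simp
  then show ?thesis using len_nonneg[of \<gamma> a b] by (simp add: ereal_real)
qed

theorem lemma3p6:
  fixes f :: "'a::euclidean_space \<Rightarrow> 'b::euclidean_space" and \<Theta> :: "'a set"
  assumes cont: "\<forall>x. isCont f x"
    and pl: "piecewise_lipschitz f \<Theta>"
    and curves: "\<forall>x y. \<forall>\<eta>>0. \<exists>\<gamma>. continuous_on {0..1} \<gamma> \<and> \<gamma> 0 = x \<and> \<gamma> 1 = y \<and>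
                   curve_length \<gamma> < ereal (dist x y + \<eta>) \<and> finite (\<gamma> ` {0..1} \<inter> \<Theta>)"
  shows "\<forall>L. intrinsic_lipschitz (UNIV - \<Theta>) f L \<longrightarrow> L-lipschitz_on UNIV f"
proof (intro allI impI)
  fix L assume il: "intrinsic_lipschitz (UNIV - \<Theta>) f L"
  have ilb: "dist (f (\<gamma> a)) (f (\<gamma> b)) \<le> L * real_of_ereal (intrinsic_dist (UNIV - \<Theta>) (\<gamma> a) (\<gamma> b))"
    and rho: "intrinsic_dist (UNIV - \<Theta>) (\<gamma> a) (\<gamma> b) = ereal (real_of_ereal (intrinsic_dist (UNIV - \<Theta>) (\<gamma> a) (\<gamma> b)))"
    and rhole: "real_of_ereal (intrinsic_dist (UNIV - \<Theta>) (\<gamma> a) (\<gamma> b)) \<le> real_of_ereal (len \<gamma> a b)"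
    and rhoge: "dist (\<gamma> a) (\<gamma> b) \<le> real_of_ereal (intrinsic_dist (UNIV - \<Theta>) (\<gamma> a) (\<gamma> b))"
    if \<gamma>c: "continuous_on {0..1} \<gamma>" and fl: "curve_length \<gamma> < \<infinity>"
      and ab: "0 \<le> a" "a < b" "b \<le> 1" and dis: "\<gamma> ` {a..b} \<inter> \<Theta> = {}" for \<gamma> a b
  proof -
    let ?\<rho> = "intrinsic_dist (UNIV - \<Theta>) (\<gamma> a) (\<gamma> b)"
    have le: "?\<rho> \<le> len \<gamma> a b" using seg[OF \<gamma>c ab, of "UNIV - \<Theta>"] dis by auto
    have lf: "len \<gamma> a b = ereal (real_of_ereal (len \<gamma> a b))" using fin_len[OF fl] ab by simp
    have ge: "ereal (dist (\<gamma> a) (\<gamma> b)) \<le> ?\<rho>" by (rule intrinsic_ge)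
    have lfin: "len \<gamma> a b < \<infinity>" by (subst lf) simp
    then have fin: "?\<rho> < \<infinity>" using le by (rule order.strict_trans1[rotated])
    have "(0::ereal) \<le> ereal (dist (\<gamma> a) (\<gamma> b))" by simp
    then have g0: "0 \<le> ?\<rho>" using ge by (rule order_trans)
    show "?\<rho> = ereal (real_of_ereal ?\<rho>)" using fin g0 by (simp add: ereal_real)
    show "real_of_ereal ?\<rho> \<le> real_of_ereal (len \<gamma> a b)"
      using real_of_ereal_positive_mono[OF g0 le] lfin by simp
    show "dist (\<gamma> a) (\<gamma> b) \<le> real_of_ereal ?\<rho>"
      using ge fin g0 by (cases ?\<rho>) auto
    have "\<gamma> a \<in> UNIV - \<Theta>" "\<gamma> b \<in> UNIV - \<Theta>" using dis ab by (auto dest: equals0D[of _ "\<gamma> a"] equals0D[of _ "\<gamma> b"])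
    then show "dist (f (\<gamma> a)) (f (\<gamma> b)) \<le> L * real_of_ereal ?\<rho>"
      using il fin unfolding intrinsic_lipschitz_def by blast
  qed
  have Lnn: "0 \<le> L"
  proof (rule ccontr)
    assume "\<not> 0 \<le> L" then have Lneg: "L < 0" by simp
    obtain e :: 'a where e: "e \<in> Basis" using nonempty_Basis by blast
    then have e0: "e \<noteq> 0" by auto
    obtain \<gamma> where \<gamma>: "continuous_on {0..1} \<gamma>" "\<gamma> 0 = 0" "\<gamma> 1 = e"
      "curve_length \<gamma> < ereal (dist 0 e + 1)" "finite (\<gamma> ` {0..1} \<inter> \<Theta>)"
      using curves[rule_format, of 1 0 e] by auto
    have fl: "curve_length \<gamma> < \<infinity>" using \<gamma>(4) order.strict_trans[OF \<gamma>(4), of \<infinity>] by simp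
    have bs: "\<forall>a b. 0 \<le> a \<longrightarrow> a < b \<longrightarrow> b \<le> 1 \<longrightarrow> \<gamma> ` {a..b} \<inter> \<Theta> = {} \<longrightarrow> dist (\<gamma> a) (\<gamma> b) \<le> (\<lambda>a b. 0::real) a b"
    proof (intro allI impI)
      fix a b :: real assume ab: "0 \<le> a" "a < b" "b \<le> 1" "\<gamma> ` {a..b} \<inter> \<Theta> = {}"
      have "\<gamma> a = \<gamma> b"
      proof (rule ccontr)
        assume "\<gamma> a \<noteq> \<gamma> b"
        then have "0 < dist (\<gamma> a) (\<gamma> b)" by simp
        then have "0 < real_of_ereal (intrinsic_dist (UNIV - \<Theta>) (\<gamma> a) (\<gamma> b))"
          using rhoge[OF \<gamma>(1) fl ab] by linarith
        then have "L * real_of_ereal (intrinsic_dist (UNIV - \<Theta>) (\<gamma> a) (\<gamma> b)) < 0"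
          using Lneg mult_neg_pos by blast
        then show False using ilb[OF \<gamma>(1) fl ab] zero_le_dist[of "f (\<gamma> a)" "f (\<gamma> b)"] by linarith
      qed
      then show "dist (\<gamma> a) (\<gamma> b) \<le> (\<lambda>a b. 0::real) a b" by simp
    qed
    have "dist (\<gamma> 0) (\<gamma> 1) \<le> (\<lambda>a b. 0::real) 0 1"
      by (rule key[OF \<gamma>(1) \<gamma>(1) _ \<gamma>(5) _ _ _ bs]) auto
    then show False using \<gamma>(2,3) e0 by simp
  qed
  show "L-lipschitz_on UNIV f"
    unfolding lipschitz_on_def
  proof (intro conjI Lnn ballI)
    fix x y assume "x \<in> (UNIV::'a set)" "y \<in> (UNIV::'a set)"
    have bound: "dist (f x) (f y) \<le> L * (dist x y + \<eta>)" if \<eta>: "\<eta> > 0" for \<eta>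
    proof -
      obtain \<gamma> where \<gamma>: "continuous_on {0..1} \<gamma>" "\<gamma> 0 = x" "\<gamma> 1 = y"
        "curve_length \<gamma> < ereal (dist x y + \<eta>)" "finite (\<gamma> ` {0..1} \<inter> \<Theta>)"
        using curves[rule_format, OF \<eta>, of x y] by auto
      have fl: "curve_length \<gamma> < \<infinity>" using \<gamma>(4) order.strict_trans[OF \<gamma>(4), of \<infinity>] by simp
      define r where "r a b = real_of_ereal (len \<gamma> a b)" for a b
      have rl: "len \<gamma> a b = ereal (r a b)" if "0 \<le> a" "a \<le> b" "b \<le> 1" for a b
        unfolding r_def using fin_len[OF fl that] .
      have hc: "continuous_on {0..1} (\<lambda>t. f (\<gamma> t))"
        by (rule continuous_on_compose2[OF continuous_at_imp_continuous_on[of UNIV f] \<gamma>(1)]) (use cont in auto)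
      have "dist (f (\<gamma> 0)) (f (\<gamma> 1)) \<le> (\<lambda>a b. L * r a b) 0 1"
      proof (rule key[OF \<gamma>(1) hc _ \<gamma>(5)])
        show "\<forall>s\<in>{0..1}. \<forall>t\<in>{0..1}. \<gamma> s = \<gamma> t \<longrightarrow> f (\<gamma> s) = f (\<gamma> t)" by auto
        show "\<forall>a b. 0 \<le> a \<longrightarrow> a \<le> b \<longrightarrow> b \<le> 1 \<longrightarrow> 0 \<le> L * r a b"
        proof (intro allI impI)
          fix a b :: real assume "0 \<le> a" "a \<le> b" "b \<le> 1"
          then have "0 \<le> r a b" using rl[of a b] len_nonneg[of \<gamma> a b] by simp
          then show "0 \<le> L * r a b" using Lnn by simp
        qed
        show "\<forall>a b c d. 0 \<le> a \<longrightarrow> a \<le> c \<longrightarrow> c \<le> d \<longrightarrow> d \<le> b \<longrightarrow> b \<le> 1 \<longrightarrow> L * r c d \<le> L * r a b"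
        proof (intro allI impI)
          fix a b c d :: real assume h: "0 \<le> a" "a \<le> c" "c \<le> d" "d \<le> b" "b \<le> 1"
          have "len \<gamma> c d \<le> len \<gamma> a b" using h by (intro len_mono) auto
          then have "r c d \<le> r a b" using rl[of a b] rl[of c d] h by simp
          then show "L * r c d \<le> L * r a b" using Lnn by (simp add: mult_left_mono)
        qed
        show "\<forall>a b c d. 0 \<le> a \<longrightarrow> a \<le> c \<longrightarrow> c \<le> d \<longrightarrow> d \<le> b \<longrightarrow> b \<le> 1 \<longrightarrow> L * r a c + L * r d b \<le> L * r a b"
        proof (intro allI impI)
          fix a b c d :: real assume h: "0 \<le> a" "a \<le> c" "c \<le> d" "d \<le> b" "b \<le> 1"
          have "len \<gamma> d b \<le> len \<gamma> c b" using h by (intro len_mono) auto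
          then have "len \<gamma> a c + len \<gamma> d b \<le> len \<gamma> a c + len \<gamma> c b" by (rule add_left_mono)
          also have "\<dots> \<le> len \<gamma> a b" using h by (intro len_add) auto
          finally have "r a c + r d b \<le> r a b" using rl[of a c] rl[of d b] rl[of a b] h by simp
          then show "L * r a c + L * r d b \<le> L * r a b" using Lnn
            by (simp add: distrib_left[symmetric] mult_left_mono)
        qed
        show "\<forall>a b. 0 \<le> a \<longrightarrow> a < b \<longrightarrow> b \<le> 1 \<longrightarrow> \<gamma> ` {a..b} \<inter> \<Theta> = {} \<longrightarrow> dist (f (\<gamma> a)) (f (\<gamma> b)) \<le> L * r a b"
        proof (intro allI impI)
          fix a b :: real assume h: "0 \<le> a" "a < b" "b \<le> 1" "\<gamma> ` {a..b} \<inter> \<Theta> = {}"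
          have "dist (f (\<gamma> a)) (f (\<gamma> b)) \<le> L * real_of_ereal (intrinsic_dist (UNIV - \<Theta>) (\<gamma> a) (\<gamma> b))"
            by (rule ilb[OF \<gamma>(1) fl h])
          also have "\<dots> \<le> L * r a b" unfolding r_def
            using rhole[OF \<gamma>(1) fl h] Lnn by (simp add: mult_left_mono)
          finally show "dist (f (\<gamma> a)) (f (\<gamma> b)) \<le> L * r a b" .
        qed
      qed
      then have "dist (f x) (f y) \<le> L * r 0 1" using \<gamma>(2,3) by simp
      also have "r 0 1 \<le> dist x y + \<eta>"
        using \<gamma>(4) rl[of 0 1] curve_length_len[of \<gamma>] by simp
      then have "L * r 0 1 \<le> L * (dist x y + \<eta>)" using Lnn by (simp add: mult_left_mono)
      finally show ?thesis .
    qed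
    show "dist (f x) (f y) \<le> L * dist x y"
    proof (rule field_le_epsilon)
      fix e :: real assume e: "0 < e"
      have "dist (f x) (f y) \<le> L * (dist x y + e / (L + 1))" using bound e Lnn by simp
      also have "\<dots> = L * dist x y + e * (L / (L + 1))" using Lnn by (simp add: field_simps)
      also have "\<dots> \<le> L * dist x y + e * 1" using Lnn e by (intro add_left_mono mult_left_mono) auto
      finally show "dist (f x) (f y) \<le> L * dist x y + e" by simp
    qed
  qed
qed

end
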